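(* Let $G$ be a partial cube and let $F_1$ and $F_2$ be $\Theta$-classes of $G$. Then $F_1 \cup F_2$ is an edge general position set of $G$.
   Context: Graphs are finite and connected. A graph $G$ is a partial cube if it is an isometric subgraph of some hypercube $Q_r$ (i.e., distances in $G$ equal distances in $Q_r$). The Djoković–Winkler relation $\Theta$ on the edges of $G$ is defined by: edges $xy$ and $uv$ are in relation $\Theta$ if $d_G(x,u) + d_G(y,v) \neq d_G(x,v) + d_G(y,u)$. In a partial cube, $\Theta$ is an equivalence relation, and its equivalence classes are called $\Theta$-classes. A set $S$ of edges of $G$ is an edge general position set if no geodesic (shortest path) of $G$ contains three edges of $S$. *)

theory Defs
  imports Main
begin

definition simple_graph :: "'a set \<Rightarrow> 'a set set \<Rightarrow> bool" where
  "simple_graph V E \<longleftrightarrow> finite V \<and>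
     (\<forall>e\<in>E. \<exists>x y. e = {x, y} \<and> x \<noteq> y \<and> x \<in> V \<and> y \<in> V)"

text \<open>A walk is a nonempty vertex list with consecutive vertices adjacent; its length is
  the number of edges, i.e. length p - 1.\<close>

definition walk :: "'a set \<Rightarrow> 'a set set \<Rightarrow> 'a list \<Rightarrow> bool" where
  "walk V E p \<longleftrightarrow> p \<noteq> [] \<and> set p \<subseteq> V \<and>
     (\<forall>i. Suc i < length p \<longrightarrow> {p ! i, p ! Suc i} \<in> E)"

definition connected_graph :: "'a set \<Rightarrow> 'a set set \<Rightarrow> bool" where
  "connected_graph V E \<longleftrightarrow> simple_graph V E \<and> V \<noteq> {} \<and>
     (\<forall>u\<in>V. \<forall>v\<in>V. \<exists>p. walk V E p \<and> hd p = u \<and> last p = v)"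

definition gdist :: "'a set \<Rightarrow> 'a set set \<Rightarrow> 'a \<Rightarrow> 'a \<Rightarrow> nat" where
  "gdist V E u v = (LEAST n. \<exists>p. walk V E p \<and> hd p = u \<and> last p = v \<and> length p = Suc n)"

text \<open>Partial cube: (connected) graph isometrically embeddable in a hypercube Q_r, whose
  vertices are the subsets of {0..<r} and whose distance is the size of the symmetric difference.\<close>

definition partial_cube :: "'a set \<Rightarrow> 'a set set \<Rightarrow> bool" where
  "partial_cube V E \<longleftrightarrow> connected_graph V E \<and>
     (\<exists>(r::nat) (f::'a \<Rightarrow> nat set).
        (\<forall>v\<in>V. f v \<subseteq> {0..<r}) \<and>
        (\<forall>u\<in>V. \<forall>v\<in>V. gdist V E u v = card ((f u - f v) \<union> (f v - f u))))"

definition Theta :: "'a set \<Rightarrow> 'a set set \<Rightarrow> 'a set \<Rightarrow> 'a set \<Rightarrow> bool" where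
  "Theta V E e f \<longleftrightarrow> e \<in> E \<and> f \<in> E \<and>
     (\<exists>x y u v. e = {x, y} \<and> f = {u, v} \<and>
        gdist V E x u + gdist V E y v \<noteq> gdist V E x v + gdist V E y u)"

definition Theta_class :: "'a set \<Rightarrow> 'a set set \<Rightarrow> 'a set set \<Rightarrow> bool" where
  "Theta_class V E F \<longleftrightarrow> (\<exists>e\<in>E. F = {f \<in> E. Theta V E e f})"

definition geodesic :: "'a set \<Rightarrow> 'a set set \<Rightarrow> 'a list \<Rightarrow> bool" where
  "geodesic V E p \<longleftrightarrow> walk V E p \<and> length p = Suc (gdist V E (hd p) (last p))"

definition edge_on :: "'a set \<Rightarrow> 'a list \<Rightarrow> bool" where
  "edge_on e p \<longleftrightarrow> (\<exists>i. Suc i < length p \<and> e = {p ! i, p ! Suc i})"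

definition edge_general_position :: "'a set \<Rightarrow> 'a set set \<Rightarrow> 'a set set \<Rightarrow> bool" where
  "edge_general_position V E S \<longleftrightarrow> S \<subseteq> E \<and>
     \<not> (\<exists>p e1 e2 e3. geodesic V E p \<and> e1 \<in> S \<and> e2 \<in> S \<and> e3 \<in> S \<and>
          e1 \<noteq> e2 \<and> e1 \<noteq> e3 \<and> e2 \<noteq> e3 \<and> edge_on e1 p \<and> edge_on e2 p \<and> edge_on e3 p)"

end

theory Submission
  imports Defs
begin

definition sd :: "nat set \<Rightarrow> nat set \<Rightarrow> nat set" where
  "sd A B = (A - B) \<union> (B - A)"

lemma sd_sym: "sd A B = sd B A" unfolding sd_def by blast

lemma sd_tri:
  assumes "finite A" "finite B" "finite C"
  shows "card (sd A C) \<le> card (sd A B) + card (sd B C)"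
proof -
  have "sd A C \<subseteq> sd A B \<union> sd B C" unfolding sd_def by blast
  hence "card (sd A C) \<le> card (sd A B \<union> sd B C)"
    by (rule card_mono[rotated]) (use assms in \<open>simp add: sd_def\<close>)
  also have "\<dots> \<le> card (sd A B) + card (sd B C)" by (rule card_Un_le)
  finally show ?thesis .
qed

lemma sd_single_mem: "sd A B = {i} \<Longrightarrow> (z \<in> B \<longleftrightarrow> (z \<in> A \<longleftrightarrow> z \<noteq> i))"
proof -
  assume h: "sd A B = {i}"
  have "z \<in> sd A B \<longleftrightarrow> z = i" using h by simp
  moreover have "z \<in> sd A B \<longleftrightarrow> \<not> (z \<in> A \<longleftrightarrow> z \<in> B)" unfolding sd_def by blast
  ultimately show ?thesis by blast
qed

lemma edge_sub: "simple_graph V E \<Longrightarrow> e \<in> E \<Longrightarrow> e \<subseteq> V"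
proof -
  assume "simple_graph V E" "e \<in> E"
  then obtain x y where "e = {x, y}" "x \<in> V" "y \<in> V" unfolding simple_graph_def by meson
  thus "e \<subseteq> V" by simp
qed

lemma edge_gdist1:
  assumes "{x, y} \<in> E" "x \<noteq> y" "x \<in> V" "y \<in> V"
  shows "gdist V E x y = 1"
proof -
  have w: "walk V E [x, y]" unfolding walk_def
  proof (intro conjI allI impI)
    fix i assume "Suc i < length [x, y]"
    hence "i = 0" by simp
    thus "{[x, y] ! i, [x, y] ! Suc i} \<in> E" using assms(1) by simp
  qed (use assms in auto)
  define P where "P = (\<lambda>n. \<exists>p. walk V E p \<and> hd p = x \<and> last p = y \<and> length p = Suc n)"
  have gd: "gdist V E x y = Least P" unfolding gdist_def P_def by simp
  have ex: "P 1" unfolding P_def using w by (intro exI[of _ "[x,y]"]) auto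
  have le: "gdist V E x y \<le> 1" unfolding gd using ex by (rule Least_le)
  have "P (Least P)" using ex by (rule LeastI)
  hence "\<exists>p. walk V E p \<and> hd p = x \<and> last p = y \<and> length p = Suc (gdist V E x y)"
    unfolding gd P_def .
  then obtain p where p: "hd p = x" "last p = y" "length p = Suc (gdist V E x y)" by blast
  have "gdist V E x y \<noteq> 0"
  proof
    assume "gdist V E x y = 0"
    with p have "length p = 1" by simp
    hence "p \<noteq> []" by auto
    hence "hd p = p!0" "last p = p!(length p - 1)" by (simp_all add: hd_conv_nth last_conv_nth)
    with p assms \<open>length p = 1\<close> show False by simp
  qed
  with le show ?thesis by simp
qed

lemma card_split:
  assumes "finite T" "i \<noteq> j"
  shows "card T = card (T - {i,j}) + (if i \<in> T then 1 else 0) + (if j \<in> T then 1 else 0)"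
proof -
  have "T = (T - {i,j}) \<union> (T \<inter> {i}) \<union> (T \<inter> {j})" by blast
  moreover have "card ((T - {i,j}) \<union> (T \<inter> {i}) \<union> (T \<inter> {j})) =
      card (T - {i,j}) + card (T \<inter> {i}) + card (T \<inter> {j})"
    using assms by (subst card_Un_disjoint; auto)+
  ultimately show ?thesis by (auto split: if_splits)
qed

lemma theta_label_aux:
  assumes fin: "finite X" "finite Y" "finite U" "finite W"
    and Y: "sd X Y = {i}" and W: "sd U W = {j}" and ij: "i \<noteq> j"
  shows "card (sd X U) + card (sd Y W) = card (sd X W) + card (sd Y U)"
proof -
  have mY: "\<And>z. z \<in> Y \<longleftrightarrow> (z \<in> X \<longleftrightarrow> z \<noteq> i)" using sd_single_mem[OF Y] .
  have mW: "\<And>z. z \<in> W \<longleftrightarrow> (z \<in> U \<longleftrightarrow> z \<noteq> j)" using sd_single_mem[OF W] .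
  have mem: "\<And>A B z. z \<in> sd A B \<longleftrightarrow> \<not> (z \<in> A \<longleftrightarrow> z \<in> B)" unfolding sd_def by blast
  have e1: "sd Y W - {i,j} = sd X U - {i,j}" unfolding set_eq_iff by (auto simp add: mem mY mW)
  have e2: "sd X W - {i,j} = sd X U - {i,j}" unfolding set_eq_iff by (auto simp add: mem mY mW)
  have e3: "sd Y U - {i,j} = sd X U - {i,j}" unfolding set_eq_iff by (auto simp add: mem mY mW)
  have f: "\<And>A B. finite A \<Longrightarrow> finite B \<Longrightarrow> finite (sd A B)" unfolding sd_def by simp
  have i1: "i \<in> sd Y W \<longleftrightarrow> \<not> i \<in> sd X U" by (simp add: mem mY mW ij)
  have i2: "i \<in> sd X W \<longleftrightarrow> i \<in> sd X U" by (simp add: mem mY mW ij)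
  have i3: "i \<in> sd Y U \<longleftrightarrow> \<not> i \<in> sd X U" by (simp add: mem mY mW ij)
  have j1: "j \<in> sd Y W \<longleftrightarrow> \<not> j \<in> sd X U" by (simp add: mem mY mW ij[symmetric])
  have j2: "j \<in> sd X W \<longleftrightarrow> \<not> j \<in> sd X U" by (simp add: mem mY mW ij[symmetric])
  have j3: "j \<in> sd Y U \<longleftrightarrow> j \<in> sd X U" by (simp add: mem mY mW ij[symmetric])
  have c1: "card (sd X U) = card (sd X U - {i,j}) + (if i \<in> sd X U then 1 else 0) + (if j \<in> sd X U then 1 else 0)"
    using card_split[OF f[OF fin(1) fin(3)] ij] .
  have c2: "card (sd Y W) = card (sd X U - {i,j}) + (if i \<in> sd X U then 0 else 1) + (if j \<in> sd X U then 0 else 1)"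
    using card_split[OF f[OF fin(2) fin(4)] ij] unfolding e1 i1 j1 by simp
  have c3: "card (sd X W) = card (sd X U - {i,j}) + (if i \<in> sd X U then 1 else 0) + (if j \<in> sd X U then 0 else 1)"
    using card_split[OF f[OF fin(1) fin(4)] ij] unfolding e2 i2 j2 by simp
  have c4: "card (sd Y U) = card (sd X U - {i,j}) + (if i \<in> sd X U then 0 else 1) + (if j \<in> sd X U then 1 else 0)"
    using card_split[OF f[OF fin(2) fin(3)] ij] unfolding e3 i3 j3 by simp
  show ?thesis unfolding c1 c2 c3 c4 by simp
qed

lemma theta_label:
  assumes emb: "\<forall>u\<in>V. \<forall>v\<in>V. gdist V E u v = card (sd (f u) (f v))"
    and fin: "\<forall>v\<in>V. finite (f v)" and sg: "simple_graph V E"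
    and th: "Theta V E e1 e2" and e1: "e1 = {a,b}" and e2: "e2 = {c,d}"
    and lab1: "sd (f a) (f b) = {i}" and lab2: "sd (f c) (f d) = {j}"
  shows "i = j"
proof (rule ccontr)
  assume ij: "i \<noteq> j"
  from th obtain x y u v where ex: "e1 = {x,y}" "e2 = {u,v}" and
    ne: "gdist V E x u + gdist V E y v \<noteq> gdist V E x v + gdist V E y u"
    and E: "e1 \<in> E" "e2 \<in> E"
    unfolding Theta_def by blast
  have V: "x \<in> V" "y \<in> V" "u \<in> V" "v \<in> V" using edge_sub[OF sg E(1)] edge_sub[OF sg E(2)] ex by auto
  have l1: "sd (f x) (f y) = {i}" using e1 ex lab1 sd_sym by (metis doubleton_eq_iff)
  have l2: "sd (f u) (f v) = {j}" using e2 ex lab2 sd_sym by (metis doubleton_eq_iff)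
  have "card (sd (f x) (f u)) + card (sd (f y) (f v)) = card (sd (f x) (f v)) + card (sd (f y) (f u))"
    using theta_label_aux[OF _ _ _ _ l1 l2 ij] fin V by auto
  with ne emb V show False by simp
qed

lemma walk_edge: "walk V E p \<Longrightarrow> Suc k < length p \<Longrightarrow> {p ! k, p ! Suc k} \<in> E"
  unfolding walk_def by blast

lemma walk_V: "walk V E p \<Longrightarrow> k < length p \<Longrightarrow> p ! k \<in> V"
  unfolding walk_def by (meson nth_mem subsetD)

lemma edge_label:
  assumes emb: "\<forall>u\<in>V. \<forall>v\<in>V. gdist V E u v = card (sd (f u) (f v))"
    and sg: "simple_graph V E" and "{x,y} \<in> E"
  shows "\<exists>i. sd (f x) (f y) = {i}"
proof -
  have V: "x \<in> V" "y \<in> V" using edge_sub[OF sg assms(3)] by auto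
  from sg assms(3) obtain a b where "{x,y} = {a,b}" "a \<noteq> b" unfolding simple_graph_def by blast
  hence "x \<noteq> y" by (metis doubleton_eq_iff)
  from edge_gdist1[OF assms(3) this V] emb V have "card (sd (f x) (f y)) = 1" by simp
  thus ?thesis by (simp add: card_1_singleton_iff)
qed

lemma path_bound:
  assumes emb: "\<forall>u\<in>V. \<forall>v\<in>V. gdist V E u v = card (sd (f u) (f v))"
    and fin: "\<forall>v\<in>V. finite (f v)" and sg: "simple_graph V E"
    and w: "walk V E p"
  shows "k \<le> l \<Longrightarrow> l < length p \<Longrightarrow> card (sd (f (p!k)) (f (p!l))) \<le> l - k"
proof (induction l)
  case 0
  then show ?case by (simp add: sd_def)
next
  case (Suc l)
  show ?case
  proof (cases "k = Suc l")
    case True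
    then show ?thesis by (simp add: sd_def)
  next
    case False
    hence kl: "k \<le> l" using Suc by simp
    have Vs: "p!k \<in> V" "p!l \<in> V" "p!Suc l \<in> V" using walk_V[OF w] Suc kl by auto
    have ed: "{p!l, p!Suc l} \<in> E" using walk_edge[OF w] Suc by simp
    obtain i where "sd (f (p!l)) (f (p!Suc l)) = {i}" using edge_label[OF emb sg ed] by blast
    hence c1: "card (sd (f (p!l)) (f (p!Suc l))) = 1" by simp
    have "card (sd (f (p!k)) (f (p!Suc l))) \<le> card (sd (f (p!k)) (f (p!l))) + card (sd (f (p!l)) (f (p!Suc l)))"
      using sd_tri fin Vs by blast
    also have "\<dots> \<le> (l - k) + 1" using Suc.IH kl Suc.prems c1 by simp
    finally show ?thesis using kl by simp
  qed
qed

lemma geo_two: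
  assumes emb: "\<forall>u\<in>V. \<forall>v\<in>V. gdist V E u v = card (sd (f u) (f v))"
    and fin: "\<forall>v\<in>V. finite (f v)" and sg: "simple_graph V E"
    and g: "geodesic V E p" and ab: "a < b" and bl: "Suc b < length p"
    and la: "sd (f (p!a)) (f (p!Suc a)) = {i}" and lb: "sd (f (p!b)) (f (p!Suc b)) = {i}"
  shows False
proof -
  have w: "walk V E p" using g unfolding geodesic_def by simp
  define n where "n = length p - 1"
  have ln: "length p = Suc n" using bl n_def by simp
  have hd: "hd p = p!0" using ln by (cases p) auto
  have lt: "last p = p!n" using ln by (metis last_conv_nth list.size(3) n_def nat.distinct(1))
  have Vs: "p!0 \<in> V" "p!a \<in> V" "p!Suc a \<in> V" "p!b \<in> V" "p!Suc b \<in> V" "p!n \<in> V"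
    using walk_V[OF w] ln ab bl by auto
  have "n = gdist V E (p!0) (p!n)" using g ln hd lt unfolding geodesic_def by simp
  hence nc: "n = card (sd (f (p!0)) (f (p!n)))" using emb Vs by simp
  have mem: "\<And>A B z. z \<in> sd A B \<longleftrightarrow> \<not> (z \<in> A \<longleftrightarrow> z \<in> B)" unfolding sd_def by blast
  have eq: "sd (f (p!a)) (f (p!Suc b)) = sd (f (p!Suc a)) (f (p!b))"
    using sd_single_mem[OF la] sd_single_mem[OF lb] mem by blast
  have b1: "card (sd (f (p!0)) (f (p!a))) \<le> a" using path_bound[OF emb fin sg w, of 0 a] ab ln bl by simp
  have b2: "card (sd (f (p!Suc a)) (f (p!b))) \<le> b - Suc a" using path_bound[OF emb fin sg w, of "Suc a" b] ab ln bl by simp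
  have b3: "card (sd (f (p!Suc b)) (f (p!n))) \<le> n - Suc b" using path_bound[OF emb fin sg w, of "Suc b" n] ab ln bl by simp
  have t1: "card (sd (f (p!0)) (f (p!n))) \<le> card (sd (f (p!0)) (f (p!a))) + card (sd (f (p!a)) (f (p!n)))"
    using sd_tri fin Vs by blast
  have t2: "card (sd (f (p!a)) (f (p!n))) \<le> card (sd (f (p!a)) (f (p!Suc b))) + card (sd (f (p!Suc b)) (f (p!n)))"
    using sd_tri fin Vs by blast
  have "n \<le> a + (b - Suc a) + (n - Suc b)" using t1 t2[unfolded eq] nc b1 b2 b3 by linarith
  thus False using ab bl ln by simp
qed

lemma two_in_class:
  assumes emb: "\<forall>u\<in>V. \<forall>v\<in>V. gdist V E u v = card (sd (f u) (f v))"
    and fin: "\<forall>v\<in>V. finite (f v)" and sg: "simple_graph V E"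
    and g: "geodesic V E p" and ne: "ea \<noteq> eb"
    and oa: "edge_on ea p" and ob: "edge_on eb p"
    and e0: "e0 \<in> E" and ta: "Theta V E e0 ea" and tb: "Theta V E e0 eb"
  shows False
proof -
  have w: "walk V E p" using g unfolding geodesic_def by simp
  from sg e0 obtain c d where cd: "e0 = {c,d}" unfolding simple_graph_def by blast
  obtain j where lj: "sd (f c) (f d) = {j}" using edge_label[OF emb sg] e0 cd by blast
  from oa obtain a where a: "Suc a < length p" "ea = {p!a, p!Suc a}" unfolding edge_on_def by blast
  from ob obtain b where b: "Suc b < length p" "eb = {p!b, p!Suc b}" unfolding edge_on_def by blast
  obtain i1 where l1: "sd (f (p!a)) (f (p!Suc a)) = {i1}" using edge_label[OF emb sg walk_edge[OF w a(1)]] by blast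
  obtain i2 where l2: "sd (f (p!b)) (f (p!Suc b)) = {i2}" using edge_label[OF emb sg walk_edge[OF w b(1)]] by blast
  have "j = i1" using theta_label[OF emb fin sg ta cd a(2) lj l1] .
  moreover have "j = i2" using theta_label[OF emb fin sg tb cd b(2) lj l2] .
  ultimately have l2': "sd (f (p!b)) (f (p!Suc b)) = {i1}" using l2 by simp
  have "a \<noteq> b" using ne a b by auto
  hence "a < b \<or> b < a" by arith
  thus False
  proof
    assume "a < b" thus False using geo_two[OF emb fin sg g _ b(1) l1 l2'] by blast
  next
    assume "b < a" thus False using geo_two[OF emb fin sg g _ a(1) l2' l1] by blast
  qed
qed

theorem lemma3p1:
  fixes V :: "'a set" and E :: "'a set set" and F1 F2 :: "'a set set"
  assumes "partial_cube V E"
    and "Theta_class V E F1"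
    and "Theta_class V E F2"
  shows "edge_general_position V E (F1 \<union> F2)"
proof -
  from assms(1) obtain r and f :: "'a \<Rightarrow> nat set" where
    sub: "\<forall>v\<in>V. f v \<subseteq> {0..<r}" and
    emb0: "\<forall>u\<in>V. \<forall>v\<in>V. gdist V E u v = card ((f u - f v) \<union> (f v - f u))"
    and cg: "connected_graph V E"
    unfolding partial_cube_def by blast
  have emb: "\<forall>u\<in>V. \<forall>v\<in>V. gdist V E u v = card (sd (f u) (f v))" using emb0 unfolding sd_def .
  have fin: "\<forall>v\<in>V. finite (f v)" using sub finite_subset by blast
  have sg: "simple_graph V E" using cg unfolding connected_graph_def by simp
  from assms(2) obtain c1 where c1: "c1 \<in> E" "F1 = {e \<in> E. Theta V E c1 e}" unfolding Theta_class_def by blast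
  from assms(3) obtain c2 where c2: "c2 \<in> E" "F2 = {e \<in> E. Theta V E c2 e}" unfolding Theta_class_def by blast
  have cls: "\<And>p ea eb c. c \<in> E \<Longrightarrow> geodesic V E p \<Longrightarrow> ea \<noteq> eb \<Longrightarrow> edge_on ea p \<Longrightarrow> edge_on eb p
     \<Longrightarrow> Theta V E c ea \<Longrightarrow> Theta V E c eb \<Longrightarrow> False"
    using two_in_class[OF emb fin sg] by blast
  show ?thesis
    unfolding edge_general_position_def
  proof
    show "F1 \<union> F2 \<subseteq> E" using c1 c2 by blast
    show "\<not> (\<exists>p e1 e2 e3. geodesic V E p \<and> e1 \<in> F1 \<union> F2 \<and> e2 \<in> F1 \<union> F2 \<and> e3 \<in> F1 \<union> F2 \<and>
          e1 \<noteq> e2 \<and> e1 \<noteq> e3 \<and> e2 \<noteq> e3 \<and> edge_on e1 p \<and> edge_on e2 p \<and> edge_on e3 p)"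
    proof
      assume "\<exists>p e1 e2 e3. geodesic V E p \<and> e1 \<in> F1 \<union> F2 \<and> e2 \<in> F1 \<union> F2 \<and> e3 \<in> F1 \<union> F2 \<and>
          e1 \<noteq> e2 \<and> e1 \<noteq> e3 \<and> e2 \<noteq> e3 \<and> edge_on e1 p \<and> edge_on e2 p \<and> edge_on e3 p"
      then obtain p e1 e2 e3 where h: "geodesic V E p" "e1 \<in> F1 \<union> F2" "e2 \<in> F1 \<union> F2" "e3 \<in> F1 \<union> F2"
          "e1 \<noteq> e2" "e1 \<noteq> e3" "e2 \<noteq> e3" "edge_on e1 p" "edge_on e2 p" "edge_on e3 p" by blast
      have key: "\<And>x y. x \<noteq> y \<Longrightarrow> edge_on x p \<Longrightarrow> edge_on y p \<Longrightarrow> x \<in> F1 \<union> F2 \<Longrightarrow> y \<in> F1 \<union> F2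
          \<Longrightarrow> (x \<in> F1 \<longleftrightarrow> y \<in> F1) \<Longrightarrow> False"
      proof -
        fix x y assume a: "x \<noteq> y" "edge_on x p" "edge_on y p" "x \<in> F1 \<union> F2" "y \<in> F1 \<union> F2"
          "x \<in> F1 \<longleftrightarrow> y \<in> F1"
        show False
        proof (cases "x \<in> F1")
          case True
          hence "Theta V E c1 x" "Theta V E c1 y" using a(6) c1(2) by auto
          thus False using cls[OF c1(1) h(1) a(1-3)] by blast
        next
          case False
          hence "x \<in> F2" "y \<in> F2" using a(4-6) by auto
          hence "Theta V E c2 x" "Theta V E c2 y" using c2(2) by auto
          thus False using cls[OF c2(1) h(1) a(1-3)] by blast
        qed
      qed
      show False
      proof (cases "e1 \<in> F1 \<longleftrightarrow> e2 \<in> F1")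
        case True thus False using key[OF h(5) h(8) h(9) h(2) h(3)] by blast
      next
        case n12: False
        show False
        proof (cases "e1 \<in> F1 \<longleftrightarrow> e3 \<in> F1")
          case True thus False using key[OF h(6) h(8) h(10) h(2) h(4)] by blast
        next
          case False
          hence "e2 \<in> F1 \<longleftrightarrow> e3 \<in> F1" using n12 by blast
          thus False using key[OF h(7) h(9) h(10) h(3) h(4)] by blast
        qed
      qed
    qed
  qed
qed

end
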